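(* Consider a sequence of problems indexed by $n$, with $p=p_n$ and a distribution of $(X,Y)$ that may depend on $n$. For each $n$, let $(X_1,Y_1),\dots,(X_n,Y_n)$ be i.i.d. copies of $(X,Y)$ with $X\in\mathbb{R}^p$, $Y\in\mathbb{R}$, $E(Y^2)<\infty$, $E(\|X\|^2)<\infty$, $E(X)=0$, $\mathrm{Var}(X)=\mathbf{I}$. Let $\beta=E(XY)$, $\tau^2=\|\beta\|^2$, $\alpha=E(Y)$, $\sigma_Y^2=\mathrm{Var}(Y)$, $\sigma^2=\sigma_Y^2-\tau^2$, $\mu_4=E[(Y-\alpha)^4]$, $W_i=X_iY_i$, $W=XY$, $\mathbf{A}=E(WW^T)$. Let $\hat\tau^2=\binom{n}{2}^{-1}\sum_{i_1<i_2}W_{i_1}^TW_{i_2}$, $\hat\sigma_Y^2=\frac{1}{n-1}\sum_{i=1}^n(Y_i-\bar Y)^2$ and $\hat\sigma^2=\hat\sigma_Y^2-\hat\tau^2$. Assume $\mu_4$ and $\tau^2$ are bounded and $\|\mathbf{A}\|_F^2/n^2\to0$. Then $\hat\sigma^2-\sigma^2\to0$ in probability.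
   Context: $\|\cdot\|_F$ is the Frobenius norm. $\sigma^2$ is the variance of the residual $Y-\alpha-\beta^TX$ of the best linear predictor. *)

theory Defs
  imports "HOL-Probability.Probability"
begin

definition obsS :: "nat \<Rightarrow> ((nat \<Rightarrow> real) \<times> real) measure" where
  "obsS q = (PiM {..<q} (\<lambda>_. borel)) \<Otimes>\<^sub>M borel"

definition beta :: "((nat \<Rightarrow> real) \<times> real) measure \<Rightarrow> nat \<Rightarrow> real" where
  "beta P j = (LINT z|P. fst z j * snd z)"

definition tau2 :: "((nat \<Rightarrow> real) \<times> real) measure \<Rightarrow> nat \<Rightarrow> real" where
  "tau2 P q = (\<Sum>j<q. (beta P j)\<^sup>2)"

definition alpha :: "((nat \<Rightarrow> real) \<times> real) measure \<Rightarrow> real" where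
  "alpha P = (LINT z|P. snd z)"

definition sigmaY2 :: "((nat \<Rightarrow> real) \<times> real) measure \<Rightarrow> real" where
  "sigmaY2 P = (LINT z|P. (snd z - alpha P)\<^sup>2)"

definition sigma2 :: "((nat \<Rightarrow> real) \<times> real) measure \<Rightarrow> nat \<Rightarrow> real" where
  "sigma2 P q = sigmaY2 P - tau2 P q"

definition mu4 :: "((nat \<Rightarrow> real) \<times> real) measure \<Rightarrow> real" where
  "mu4 P = (LINT z|P. (snd z - alpha P) ^ 4)"

definition Amat :: "((nat \<Rightarrow> real) \<times> real) measure \<Rightarrow> nat \<Rightarrow> nat \<Rightarrow> real" where
  "Amat P j k = (LINT z|P. fst z j * fst z k * (snd z)\<^sup>2)"

definition frobA2 :: "((nat \<Rightarrow> real) \<times> real) measure \<Rightarrow> nat \<Rightarrow> real" where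
  "frobA2 P q = (\<Sum>j<q. \<Sum>k<q. (Amat P j k)\<^sup>2)"

definition tauhat2 :: "nat \<Rightarrow> nat \<Rightarrow> (nat \<Rightarrow> 'a \<Rightarrow> nat \<Rightarrow> real) \<Rightarrow> (nat \<Rightarrow> 'a \<Rightarrow> real) \<Rightarrow> 'a \<Rightarrow> real" where
  "tauhat2 n q X Y \<omega> =
     (\<Sum>i2<n. \<Sum>i1<i2. \<Sum>j<q. (X i1 \<omega> j * Y i1 \<omega>) * (X i2 \<omega> j * Y i2 \<omega>)) / real (n choose 2)"

definition Ybar :: "nat \<Rightarrow> (nat \<Rightarrow> 'a \<Rightarrow> real) \<Rightarrow> 'a \<Rightarrow> real" where
  "Ybar n Y \<omega> = (\<Sum>i<n. Y i \<omega>) / real n"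

definition sigmaYhat2 :: "nat \<Rightarrow> (nat \<Rightarrow> 'a \<Rightarrow> real) \<Rightarrow> 'a \<Rightarrow> real" where
  "sigmaYhat2 n Y \<omega> = (\<Sum>i<n. (Y i \<omega> - Ybar n Y \<omega>)\<^sup>2) / (real n - 1)"

definition sigmahat2 :: "nat \<Rightarrow> nat \<Rightarrow> (nat \<Rightarrow> 'a \<Rightarrow> nat \<Rightarrow> real) \<Rightarrow> (nat \<Rightarrow> 'a \<Rightarrow> real) \<Rightarrow> 'a \<Rightarrow> real" where
  "sigmahat2 n q X Y \<omega> = sigmaYhat2 n Y \<omega> - tauhat2 n q X Y \<omega>"

end

theory Submission
  imports Defs "HOL-Real_Asymp.Real_Asymp"
begin

type_synonym obs = "(nat \<Rightarrow> real) \<times> real"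

lemma meas_coord[measurable]: "j < q \<Longrightarrow> (\<lambda>z. fst z j) \<in> borel_measurable (obsS q)"
  unfolding obsS_def by (rule measurable_compose[OF measurable_fst measurable_component_singleton]) auto

lemma meas_snd[measurable]: "snd \<in> borel_measurable (obsS q)"
  unfolding obsS_def by (rule measurable_snd)

locale iid = prob_space M for M :: "'a measure" +
  fixes P :: "obs measure" and q :: nat and n :: nat and Z :: "nat \<Rightarrow> 'a \<Rightarrow> obs"
  assumes P_prob: "prob_space P" and P_sets: "sets P = sets (obsS q)"
   and Zm: "\<And>i. i < n \<Longrightarrow> Z i \<in> measurable M (obsS q)"
   and ind: "indep_vars (\<lambda>_. obsS q) Z {..<n}"
   and dist: "\<And>i. i < n \<Longrightarrow> distr M (obsS q) (Z i) = P"
begin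

lemma measP: "measurable P N = measurable (obsS q) N"
  by (rule measurable_cong_sets[OF P_sets refl])

lemma Z_integrable:
  fixes f :: "obs \<Rightarrow> real"
  assumes "i < n" "f \<in> borel_measurable (obsS q)"
  shows "integrable M (\<lambda>\<omega>. f (Z i \<omega>)) \<longleftrightarrow> integrable P f"
  using integrable_distr_eq[OF Zm[OF assms(1)] assms(2)] dist[OF assms(1)] by simp

lemma Z_integral:
  fixes f :: "obs \<Rightarrow> real"
  assumes "i < n" "f \<in> borel_measurable (obsS q)"
  shows "(\<integral>\<omega>. f (Z i \<omega>) \<partial>M) = (\<integral>z. f z \<partial>P)"
  using integral_distr[OF Zm[OF assms(1)] assms(2)] dist[OF assms(1)] by simp

lemma K1:
  fixes f :: "obs \<Rightarrow> real" and g :: "(nat \<Rightarrow> obs) \<Rightarrow> real"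
  assumes i: "i < n" and S: "S \<subseteq> {..<n}" "i \<notin> S"
   and f: "f \<in> borel_measurable (obsS q)" and g: "g \<in> borel_measurable (PiM S (\<lambda>_. obsS q))"
   and fi: "integrable P f" and gi: "integrable M (\<lambda>\<omega>. g (\<lambda>k\<in>S. Z k \<omega>))"
  shows "integrable M (\<lambda>\<omega>. f (Z i \<omega>) * g (\<lambda>k\<in>S. Z k \<omega>))"
    and "(\<integral>\<omega>. f (Z i \<omega>) * g (\<lambda>k\<in>S. Z k \<omega>) \<partial>M) = (\<integral>z. f z \<partial>P) * (\<integral>\<omega>. g (\<lambda>k\<in>S. Z k \<omega>) \<partial>M)"
proof -
  have "indep_var (PiM {i} (\<lambda>_. obsS q)) (\<lambda>\<omega>. \<lambda>k\<in>{i}. Z k \<omega>) (PiM S (\<lambda>_. obsS q)) (\<lambda>\<omega>. \<lambda>k\<in>S. Z k \<omega>)"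
    by (rule indep_var_restrict[OF ind]) (use i S in auto)
  moreover have "(\<lambda>x. f (x i)) \<in> borel_measurable (PiM {i} (\<lambda>_. obsS q))"
    using measurable_compose[OF measurable_component_singleton[of i "{i}" "\<lambda>_. obsS q"] f] by simp
  ultimately have iv: "indep_var borel ((\<lambda>x. f (x i)) \<circ> (\<lambda>\<omega>. \<lambda>k\<in>{i}. Z k \<omega>)) borel (g \<circ> (\<lambda>\<omega>. \<lambda>k\<in>S. Z k \<omega>))"
    by (rule indep_var_compose[OF _ _ g])
  have e: "((\<lambda>x. f (x i)) \<circ> (\<lambda>\<omega>. \<lambda>k\<in>{i}. Z k \<omega>)) = (\<lambda>\<omega>. f (Z i \<omega>))" by auto
  have iv': "indep_var borel (\<lambda>\<omega>. f (Z i \<omega>)) borel (\<lambda>\<omega>. g (\<lambda>k\<in>S. Z k \<omega>))"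
    using iv unfolding e comp_def .
  have fi': "integrable M (\<lambda>\<omega>. f (Z i \<omega>))" using Z_integrable[OF i f] fi by simp
  show "integrable M (\<lambda>\<omega>. f (Z i \<omega>) * g (\<lambda>k\<in>S. Z k \<omega>))"
    by (rule indep_var_integrable[OF iv' fi' gi])
  show "(\<integral>\<omega>. f (Z i \<omega>) * g (\<lambda>k\<in>S. Z k \<omega>) \<partial>M) = (\<integral>z. f z \<partial>P) * (\<integral>\<omega>. g (\<lambda>k\<in>S. Z k \<omega>) \<partial>M)"
    using indep_var_lebesgue_integral[OF iv' fi' gi] Z_integral[OF i f] by simp
qed

end

definition ww :: "nat \<Rightarrow> obs \<Rightarrow> real" where "ww j z = fst z j * snd z"
definition vv :: "obs measure \<Rightarrow> nat \<Rightarrow> obs \<Rightarrow> real" where "vv Q j z = ww j z - beta Q j"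
definition uu :: "obs measure \<Rightarrow> obs \<Rightarrow> real" where "uu Q z = snd z - alpha Q"
definition Cm :: "obs measure \<Rightarrow> nat \<Rightarrow> nat \<Rightarrow> real" where "Cm Q j k = Amat Q j k - beta Q j * beta Q k"
definition h5 :: "obs measure \<Rightarrow> nat \<Rightarrow> obs \<Rightarrow> real" where "h5 Q q z = (\<Sum>j<q. beta Q j * vv Q j z)"
definition h1 :: "obs measure \<Rightarrow> obs \<Rightarrow> real" where "h1 Q z = (uu Q z)\<^sup>2 - sigmaY2 Q"

lemma ww_meas: "j < q \<Longrightarrow> ww j \<in> borel_measurable (obsS q)"
  unfolding ww_def[abs_def] by (intro borel_measurable_times meas_coord meas_snd)
lemma vv_meas: "j < q \<Longrightarrow> vv Q j \<in> borel_measurable (obsS q)"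
  unfolding vv_def[abs_def] using ww_meas by measurable
lemma uu_meas: "uu Q \<in> borel_measurable (obsS q)"
  unfolding uu_def[abs_def] by measurable
lemma h1_meas: "h1 Q \<in> borel_measurable (obsS q)"
  unfolding h1_def[abs_def] using uu_meas by measurable
lemma h5_meas: "h5 Q q \<in> borel_measurable (obsS q)"
  unfolding h5_def[abs_def] by (intro borel_measurable_sum borel_measurable_times vv_meas) auto

lemma abs_mult_le_sq: "\<bar>(a::real) * b\<bar> \<le> a\<^sup>2 + b\<^sup>2"
proof -
  have "0 \<le> (\<bar>a\<bar> - \<bar>b\<bar>)\<^sup>2" by simp
  then have "2 * \<bar>a\<bar> * \<bar>b\<bar> \<le> a\<^sup>2 + b\<^sup>2" by (simp add: power2_eq_square algebra_simps)
  moreover have "0 \<le> \<bar>a\<bar> * \<bar>b\<bar>" by simp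
  ultimately show ?thesis unfolding abs_mult by linarith
qed

lemma L2prod:
  fixes h k :: "'b \<Rightarrow> real"
  assumes "h \<in> borel_measurable N" "k \<in> borel_measurable N"
    "integrable N (\<lambda>z. (h z)\<^sup>2)" "integrable N (\<lambda>z. (k z)\<^sup>2)"
  shows "integrable N (\<lambda>z. h z * k z)"
proof -
  have i1: "integrable N (\<lambda>z. (h z)\<^sup>2 + (k z)\<^sup>2)" using assms by auto
  have m: "(\<lambda>z. h z * k z) \<in> borel_measurable N" using assms by measurable
  have "norm (h x * k x) \<le> norm ((h x)\<^sup>2 + (k x)\<^sup>2)" for x
  proof -
    have "\<bar>h x * k x\<bar> \<le> (h x)\<^sup>2 + (k x)\<^sup>2"
      by (rule abs_mult_le_sq)
    then show ?thesis by simp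
  qed
  then show ?thesis by (intro Bochner_Integration.integrable_bound[OF i1 m] AE_I2)
qed


locale model = iid +
  assumes Y2: "integrable P (\<lambda>z. (snd z)\<^sup>2)"
  and Aint: "\<And>j k. j < q \<Longrightarrow> k < q \<Longrightarrow> integrable P (\<lambda>z. fst z j * fst z k * (snd z)\<^sup>2)"
  and m4int: "integrable P (\<lambda>z. (snd z - alpha P)^4)"
begin

interpretation Pp: prob_space P by (rule P_prob)

lemma mP: "f \<in> borel_measurable (obsS q) \<Longrightarrow> f \<in> borel_measurable P"
  by (simp only: measP)

lemma i_snd: "integrable P snd"
  using Pp.square_integrable_imp_integrable[OF mP[OF meas_snd]] Y2 by simp

lemma i_uu: "integrable P (uu P)"
  unfolding uu_def[abs_def] using i_snd by simp

lemma i_uu2: "integrable P (\<lambda>z. (uu P z)\<^sup>2)"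
proof -
  have "(\<lambda>z. (uu P z)\<^sup>2) = (\<lambda>z. (snd z)\<^sup>2 - 2 * alpha P * snd z + (alpha P)\<^sup>2)"
    by (auto simp: uu_def power2_diff)
  then show ?thesis using Y2 i_snd by simp
qed

lemma i_uu4: "integrable P (\<lambda>z. (uu P z)^4)"
  using m4int by (simp add: uu_def)

lemma E_uu: "(\<integral>z. uu P z \<partial>P) = 0"
  using i_snd by (simp add: uu_def alpha_def Pp.prob_space)

lemma E_uu2: "(\<integral>z. (uu P z)\<^sup>2 \<partial>P) = sigmaY2 P"
  by (simp add: uu_def sigmaY2_def)

lemma E_uu4: "(\<integral>z. (uu P z)^4 \<partial>P) = mu4 P"
  by (simp add: uu_def mu4_def)

lemma s_nonneg: "0 \<le> sigmaY2 P"
  unfolding sigmaY2_def by (rule integral_nonneg_AE) auto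

lemma s_le: "sigmaY2 P \<le> (1 + mu4 P) / 2"
proof -
  have "(\<integral>z. (uu P z)\<^sup>2 \<partial>P) \<le> (\<integral>z. (1 + (uu P z)^4) / 2 \<partial>P)"
  proof (rule integral_mono)
    show "integrable P (\<lambda>z. (1 + (uu P z)^4) / 2)" using i_uu4 by simp
    show "(uu P x)\<^sup>2 \<le> (1 + (uu P x)^4) / 2" for x
    proof -
      have "0 \<le> ((uu P x)\<^sup>2 - 1)\<^sup>2" by simp
      then show ?thesis by (simp add: power2_eq_square power4_eq_xxxx algebra_simps)
    qed
  qed (use i_uu2 in auto)
  also have "\<dots> = (1 + mu4 P) / 2" using i_uu4 E_uu4 by (simp add: Pp.prob_space)
  finally show ?thesis using E_uu2 by simp
qed

lemma i_ww2: "j < q \<Longrightarrow> k < q \<Longrightarrow> integrable P (\<lambda>z. ww j z * ww k z)"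
proof -
  assume a: "j < q" "k < q"
  have "(\<lambda>z. ww j z * ww k z) = (\<lambda>z. fst z j * fst z k * (snd z)\<^sup>2)"
    by (auto simp: ww_def power2_eq_square)
  then show ?thesis using Aint[OF a] by simp
qed

lemma i_ww: "j < q \<Longrightarrow> integrable P (ww j)"
  using Pp.square_integrable_imp_integrable[OF mP[OF ww_meas], of j] i_ww2[of j j]
  by (simp add: power2_eq_square)

lemma E_ww: "(\<integral>z. ww j z \<partial>P) = beta P j"
  by (simp add: ww_def beta_def)

lemma E_ww2: "(\<integral>z. ww j z * ww k z \<partial>P) = Amat P j k"
  unfolding Amat_def ww_def by (rule Bochner_Integration.integral_cong) (auto simp: power2_eq_square)

lemma i_vv: "j < q \<Longrightarrow> integrable P (vv P j)"
  unfolding vv_def[abs_def] using i_ww by simp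

lemma E_vv: "j < q \<Longrightarrow> (\<integral>z. vv P j z \<partial>P) = 0"
  unfolding vv_def using i_ww E_ww by (simp add: Pp.prob_space)

lemma vv_prod: "vv P j z * vv P k z = ww j z * ww k z - beta P k * ww j z - beta P j * ww k z + beta P j * beta P k"
  by (simp add: vv_def algebra_simps)

lemma i_vv2: "j < q \<Longrightarrow> k < q \<Longrightarrow> integrable P (\<lambda>z. vv P j z * vv P k z)"
  unfolding vv_prod using i_ww i_ww2 by simp

lemma E_vv2: "j < q \<Longrightarrow> k < q \<Longrightarrow> (\<integral>z. vv P j z * vv P k z \<partial>P) = Cm P j k"
  unfolding vv_prod using i_ww i_ww2 E_ww E_ww2
  by (simp add: Pp.prob_space Cm_def)

lemma i_vvsq: "j < q \<Longrightarrow> integrable P (\<lambda>z. (vv P j z)\<^sup>2)"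
  using i_vv2[of j j] by (simp add: power2_eq_square)

lemma h1_sq: "(h1 P z)\<^sup>2 = (uu P z)^4 - 2 * sigmaY2 P * (uu P z)\<^sup>2 + (sigmaY2 P)\<^sup>2"
  by (simp add: h1_def power2_eq_square power4_eq_xxxx algebra_simps)

lemma i_h1: "integrable P (h1 P)"
  unfolding h1_def[abs_def] using i_uu2 by simp

lemma E_h1: "(\<integral>z. h1 P z \<partial>P) = 0"
  unfolding h1_def using i_uu2 E_uu2 by (simp add: Pp.prob_space)

lemma i_h1sq: "integrable P (\<lambda>z. (h1 P z)\<^sup>2)"
  unfolding h1_sq using i_uu2 i_uu4 by simp

lemma E_h1sq: "(\<integral>z. (h1 P z)\<^sup>2 \<partial>P) \<le> mu4 P"
proof -
  have "(\<integral>z. (h1 P z)\<^sup>2 \<partial>P) = mu4 P - (sigmaY2 P)\<^sup>2"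
    unfolding h1_sq using i_uu2 i_uu4 E_uu2 E_uu4 by (simp add: Pp.prob_space power2_eq_square)
  then show ?thesis by simp
qed

lemma i_h5: "integrable P (h5 P q)"
  unfolding h5_def[abs_def] using i_vv by (auto intro!: Bochner_Integration.integrable_sum integrable_mult_right)

lemma E_h5: "(\<integral>z. h5 P q z \<partial>P) = 0"
  unfolding h5_def using i_vv E_vv by (simp add: Bochner_Integration.integral_sum)

lemma h5_sq: "(h5 P q z)\<^sup>2 = (\<Sum>j<q. \<Sum>k<q. beta P j * beta P k * (vv P j z * vv P k z))"
  unfolding h5_def power2_eq_square sum_product by (simp add: algebra_simps)

lemma i_h5sq_term: "j \<in> {..<q} \<Longrightarrow> k \<in> {..<q} \<Longrightarrow> integrable P (\<lambda>z. beta P j * beta P k * (vv P j z * vv P k z))"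
  using i_vv2[of j k] by simp

lemma i_h5sq_inner: "j \<in> {..<q} \<Longrightarrow> integrable P (\<lambda>z. \<Sum>k<q. beta P j * beta P k * (vv P j z * vv P k z))"
  by (rule Bochner_Integration.integrable_sum, rule i_h5sq_term)

lemma i_h5sq: "integrable P (\<lambda>z. (h5 P q z)\<^sup>2)"
  unfolding h5_sq by (rule Bochner_Integration.integrable_sum, rule i_h5sq_inner)

lemma E_h5sq: "(\<integral>z. (h5 P q z)\<^sup>2 \<partial>P) = (\<Sum>j<q. \<Sum>k<q. beta P j * beta P k * Cm P j k)"
proof -
  have "(\<integral>z. (h5 P q z)\<^sup>2 \<partial>P) = (\<Sum>j<q. (\<integral>z. (\<Sum>k<q. beta P j * beta P k * (vv P j z * vv P k z)) \<partial>P))"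
    unfolding h5_sq by (rule Bochner_Integration.integral_sum, rule i_h5sq_inner)
  also have "\<dots> = (\<Sum>j<q. \<Sum>k<q. (\<integral>z. beta P j * beta P k * (vv P j z * vv P k z) \<partial>P))"
    by (rule sum.cong[OF refl], rule Bochner_Integration.integral_sum, rule i_h5sq_term)
  also have "\<dots> = (\<Sum>j<q. \<Sum>k<q. beta P j * beta P k * Cm P j k)"
    using E_vv2 by simp
  finally show ?thesis .
qed

end

context iid begin

lemma meas_sq: "f \<in> borel_measurable (obsS q) \<Longrightarrow> f \<in> borel_measurable P"
  by (simp only: measP)

lemma pair_term:
  fixes h k :: "obs \<Rightarrow> real"
  assumes hm: "h \<in> borel_measurable (obsS q)" and km: "k \<in> borel_measurable (obsS q)"
   and hP: "integrable P h" and kP: "integrable P k" and hkP: "integrable P (\<lambda>z. h z * k z)"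
   and h0: "(\<integral>z. h z \<partial>P) = 0" and a: "a < n" and b: "b < n"
  shows "integrable M (\<lambda>\<omega>. h (Z a \<omega>) * k (Z b \<omega>))"
   and "(\<integral>\<omega>. h (Z a \<omega>) * k (Z b \<omega>) \<partial>M) = (if a = b then (\<integral>z. h z * k z \<partial>P) else 0)"
proof -
  have "integrable M (\<lambda>\<omega>. h (Z a \<omega>) * k (Z b \<omega>)) \<and>
        (\<integral>\<omega>. h (Z a \<omega>) * k (Z b \<omega>) \<partial>M) = (if a = b then (\<integral>z. h z * k z \<partial>P) else 0)"
  proof (cases "a = b")
    case True
    have m: "(\<lambda>z. h z * k z) \<in> borel_measurable (obsS q)" using hm km by measurable
    show ?thesis using True Z_integrable[OF a m] Z_integral[OF a m] hkP by simp
  next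
    case False
    have g: "(\<lambda>x. k (x b)) \<in> borel_measurable (PiM {b} (\<lambda>_. obsS q))"
      using measurable_compose[OF measurable_component_singleton[of b "{b}" "\<lambda>_. obsS q"] km] by simp
    have gi: "integrable M (\<lambda>\<omega>. (\<lambda>x. k (x b)) (\<lambda>k\<in>{b}. Z k \<omega>))"
      using Z_integrable[OF b km] kP by simp
    note K = K1[OF a _ _ hm g hP gi]
    have "{b} \<subseteq> {..<n}" "a \<notin> {b}" using b False by auto
    from K[OF this] show ?thesis using False h0 by simp
  qed
  then show "integrable M (\<lambda>\<omega>. h (Z a \<omega>) * k (Z b \<omega>))"
   and "(\<integral>\<omega>. h (Z a \<omega>) * k (Z b \<omega>) \<partial>M) = (if a = b then (\<integral>z. h z * k z \<partial>P) else 0)"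
    by auto
qed

lemma G1:
  fixes h k :: "obs \<Rightarrow> real"
  assumes hm: "h \<in> borel_measurable (obsS q)" and km: "k \<in> borel_measurable (obsS q)"
   and h2: "integrable P (\<lambda>z. (h z)\<^sup>2)" and k2: "integrable P (\<lambda>z. (k z)\<^sup>2)"
   and h0: "(\<integral>z. h z \<partial>P) = 0" and I: "I \<subseteq> {..<n}"
  shows "integrable M (\<lambda>\<omega>. (\<Sum>a\<in>I. h (Z a \<omega>)) * (\<Sum>a\<in>I. k (Z a \<omega>)))"
   and "(\<integral>\<omega>. (\<Sum>a\<in>I. h (Z a \<omega>)) * (\<Sum>a\<in>I. k (Z a \<omega>)) \<partial>M) = real (card I) * (\<integral>z. h z * k z \<partial>P)"
proof -
  interpret Pp: prob_space P by (rule P_prob)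
  have hP: "integrable P h" using Pp.square_integrable_imp_integrable[OF meas_sq[OF hm] h2] .
  have kP: "integrable P k" using Pp.square_integrable_imp_integrable[OF meas_sq[OF km] k2] .
  have hkP: "integrable P (\<lambda>z. h z * k z)" using L2prod[OF meas_sq[OF hm] meas_sq[OF km] h2 k2] .
  have fin: "finite I" using I finite_subset by blast
  note PT = pair_term[OF hm km hP kP hkP h0]
  have eq: "(\<lambda>\<omega>. (\<Sum>a\<in>I. h (Z a \<omega>)) * (\<Sum>a\<in>I. k (Z a \<omega>))) = (\<lambda>\<omega>. \<Sum>a\<in>I. \<Sum>b\<in>I. h (Z a \<omega>) * k (Z b \<omega>))"
    by (simp add: sum_product)
  have ti: "integrable M (\<lambda>\<omega>. \<Sum>b\<in>I. h (Z a \<omega>) * k (Z b \<omega>))" if "a \<in> I" for a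
    using that I by (intro Bochner_Integration.integrable_sum PT(1)) auto
  show "integrable M (\<lambda>\<omega>. (\<Sum>a\<in>I. h (Z a \<omega>)) * (\<Sum>a\<in>I. k (Z a \<omega>)))"
    unfolding eq by (intro Bochner_Integration.integrable_sum ti)
  have "(\<integral>\<omega>. (\<Sum>a\<in>I. h (Z a \<omega>)) * (\<Sum>a\<in>I. k (Z a \<omega>)) \<partial>M) = (\<Sum>a\<in>I. (\<integral>\<omega>. (\<Sum>b\<in>I. h (Z a \<omega>) * k (Z b \<omega>)) \<partial>M))"
    unfolding eq by (intro Bochner_Integration.integral_sum ti)
  also have "\<dots> = (\<Sum>a\<in>I. \<Sum>b\<in>I. (\<integral>\<omega>. h (Z a \<omega>) * k (Z b \<omega>) \<partial>M))"
    using I by (intro sum.cong refl Bochner_Integration.integral_sum PT(1)) auto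
  also have "\<dots> = (\<Sum>a\<in>I. \<Sum>b\<in>I. (if a = b then (\<integral>z. h z * k z \<partial>P) else 0))"
    using I by (intro sum.cong refl PT(2)) auto
  also have "\<dots> = real (card I) * (\<integral>z. h z * k z \<partial>P)"
    using fin by simp
  finally show "(\<integral>\<omega>. (\<Sum>a\<in>I. h (Z a \<omega>)) * (\<Sum>a\<in>I. k (Z a \<omega>)) \<partial>M) = real (card I) * (\<integral>z. h z * k z \<partial>P)" .
qed

end

definition Rs :: "obs measure \<Rightarrow> (nat \<Rightarrow> 'a \<Rightarrow> obs) \<Rightarrow> nat \<Rightarrow> nat \<Rightarrow> 'a \<Rightarrow> real" where
  "Rs Q Z b j \<omega> = (\<Sum>a<b. vv Q j (Z a \<omega>))"
definition Tb :: "obs measure \<Rightarrow> nat \<Rightarrow> (nat \<Rightarrow> 'a \<Rightarrow> obs) \<Rightarrow> nat \<Rightarrow> 'a \<Rightarrow> real" where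
  "Tb Q q Z b \<omega> = (\<Sum>j<q. vv Q j (Z b \<omega>) * Rs Q Z b j \<omega>)"
definition Dd :: "obs measure \<Rightarrow> nat \<Rightarrow> (nat \<Rightarrow> 'a \<Rightarrow> obs) \<Rightarrow> nat \<Rightarrow> 'a \<Rightarrow> real" where
  "Dd Q q Z m \<omega> = (\<Sum>b<m. Tb Q q Z b \<omega>)"

lemma sum_lessThan_choose2: "(\<Sum>b<m. real b) = real (m choose 2)"
proof (induction m)
  case 0 then show ?case by simp
next
  case (Suc m)
  have "Suc m choose 2 = m + (m choose 2)"
    using binomial_Suc_Suc[of m 1] by (simp add: numeral_2_eq_2)
  then show ?case using Suc by simp
qed

context model begin

interpretation Pp: prob_space P by (rule P_prob)

lemma Zf_meas: "a < n \<Longrightarrow> f \<in> borel_measurable (obsS q) \<Longrightarrow> (\<lambda>\<omega>. f (Z a \<omega>)) \<in> borel_measurable M"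
  using measurable_compose[OF Zm] by blast

lemma R_meas: "b \<le> n \<Longrightarrow> j < q \<Longrightarrow> Rs P Z b j \<in> borel_measurable M"
  unfolding Rs_def[abs_def] by (intro borel_measurable_sum Zf_meas vv_meas) auto

lemma T_meas: "b < n \<Longrightarrow> Tb P q Z b \<in> borel_measurable M"
  unfolding Tb_def[abs_def] by (intro borel_measurable_sum borel_measurable_times Zf_meas vv_meas R_meas) auto

lemma L_R:
  assumes "b \<le> n" "j < q" "k < q"
  shows "integrable M (\<lambda>\<omega>. Rs P Z b j \<omega> * Rs P Z b k \<omega>)"
    and "(\<integral>\<omega>. Rs P Z b j \<omega> * Rs P Z b k \<omega> \<partial>M) = real b * Cm P j k"
proof -
  have I: "{..<b} \<subseteq> {..<n}" using assms by auto
  note G = G1[OF vv_meas[OF assms(2)] vv_meas[OF assms(3)] i_vvsq[OF assms(2)] i_vvsq[OF assms(3)] E_vv[OF assms(2)] I]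
  show "integrable M (\<lambda>\<omega>. Rs P Z b j \<omega> * Rs P Z b k \<omega>)" using G(1) by (simp add: Rs_def)
  show "(\<integral>\<omega>. Rs P Z b j \<omega> * Rs P Z b k \<omega> \<partial>M) = real b * Cm P j k"
    using G(2) E_vv2[OF assms(2,3)] by (simp add: Rs_def)
qed

lemma gRR_meas: "(\<lambda>x. (\<Sum>a<b. vv P j (x a)) * (\<Sum>a<b. vv P k (x a))) \<in> borel_measurable (PiM {..<b} (\<lambda>_. obsS q))"
  if "j < q" "k < q" for j k b
proof -
  have c: "a < b \<Longrightarrow> i < q \<Longrightarrow> (\<lambda>x. vv P i (x a)) \<in> borel_measurable (PiM {..<b} (\<lambda>_. obsS q))" for a i
    using measurable_compose[OF measurable_component_singleton[of a "{..<b}" "\<lambda>_. obsS q"] vv_meas[of i q P]] by simp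
  show ?thesis using that by (intro borel_measurable_times borel_measurable_sum c) auto
qed

lemma L_T2:
  assumes b: "b < n"
  shows "integrable M (\<lambda>\<omega>. (Tb P q Z b \<omega>)\<^sup>2)"
    and "(\<integral>\<omega>. (Tb P q Z b \<omega>)\<^sup>2 \<partial>M) = real b * (\<Sum>j<q. \<Sum>k<q. (Cm P j k)\<^sup>2)"
proof -
  have eq: "(Tb P q Z b \<omega>)\<^sup>2 = (\<Sum>j<q. \<Sum>k<q. (vv P j (Z b \<omega>) * vv P k (Z b \<omega>)) * (Rs P Z b j \<omega> * Rs P Z b k \<omega>))" for \<omega>
    unfolding Tb_def power2_eq_square sum_product by (simp add: algebra_simps)
  have tm: "integrable M (\<lambda>\<omega>. (vv P j (Z b \<omega>) * vv P k (Z b \<omega>)) * (Rs P Z b j \<omega> * Rs P Z b k \<omega>)) \<and>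
     (\<integral>\<omega>. (vv P j (Z b \<omega>) * vv P k (Z b \<omega>)) * (Rs P Z b j \<omega> * Rs P Z b k \<omega>) \<partial>M) = real b * (Cm P j k)\<^sup>2"
    if j: "j < q" and k: "k < q" for j k
  proof -
    have fm: "(\<lambda>z. vv P j z * vv P k z) \<in> borel_measurable (obsS q)"
      using vv_meas[OF j] vv_meas[OF k] by measurable
    have gr: "(\<lambda>x. (\<Sum>a<b. vv P j (x a)) * (\<Sum>a<b. vv P k (x a))) (\<lambda>i\<in>{..<b}. Z i \<omega>) = Rs P Z b j \<omega> * Rs P Z b k \<omega>" for \<omega>
      by (simp add: Rs_def)
    have gi: "integrable M (\<lambda>\<omega>. (\<lambda>x. (\<Sum>a<b. vv P j (x a)) * (\<Sum>a<b. vv P k (x a))) (\<lambda>i\<in>{..<b}. Z i \<omega>))"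
      unfolding gr using L_R(1)[of b j k] b j k by simp
    note K = K1[OF b _ _ fm gRR_meas[OF j k] i_vv2[OF j k] gi]
    have "{..<b} \<subseteq> {..<n}" "b \<notin> {..<b}" using b by auto
    from K[OF this] show ?thesis unfolding gr using L_R(2)[of b j k] b j k E_vv2[OF j k]
      by (simp add: power2_eq_square)
  qed
  show "integrable M (\<lambda>\<omega>. (Tb P q Z b \<omega>)\<^sup>2)"
    unfolding eq using tm by (intro Bochner_Integration.integrable_sum) auto
  have "(\<integral>\<omega>. (Tb P q Z b \<omega>)\<^sup>2 \<partial>M) = (\<Sum>j<q. \<Sum>k<q. (\<integral>\<omega>. (vv P j (Z b \<omega>) * vv P k (Z b \<omega>)) * (Rs P Z b j \<omega> * Rs P Z b k \<omega>) \<partial>M))"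
    unfolding eq using tm
    by (subst Bochner_Integration.integral_sum, (intro Bochner_Integration.integrable_sum; auto),
        intro sum.cong refl Bochner_Integration.integral_sum, auto)
  also have "\<dots> = (\<Sum>j<q. \<Sum>k<q. real b * (Cm P j k)\<^sup>2)"
    using tm by (intro sum.cong refl) auto
  finally show "(\<integral>\<omega>. (Tb P q Z b \<omega>)\<^sup>2 \<partial>M) = real b * (\<Sum>j<q. \<Sum>k<q. (Cm P j k)\<^sup>2)"
    by (simp add: sum_distrib_left)
qed

end

context model begin

lemma L_cross:
  assumes bb: "b < b'" and b': "b' < n"
  shows "integrable M (\<lambda>\<omega>. Tb P q Z b \<omega> * Tb P q Z b' \<omega>)"
    and "(\<integral>\<omega>. Tb P q Z b \<omega> * Tb P q Z b' \<omega> \<partial>M) = 0"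
proof -
  have b: "b < n" using bb b' by simp
  have eq: "Tb P q Z b \<omega> * Tb P q Z b' \<omega> = (\<Sum>j<q. vv P j (Z b' \<omega>) * (Rs P Z b' j \<omega> * Tb P q Z b \<omega>))" for \<omega>
    unfolding Tb_def[of P q Z b'] sum_distrib_left by (simp add: algebra_simps)
  define g where "g j x = (\<Sum>a<b'. vv P j (x a)) * (\<Sum>k<q. vv P k (x b) * (\<Sum>a<b. vv P k (x a)))" for j x
  have c: "a < b' \<Longrightarrow> i < q \<Longrightarrow> (\<lambda>x. vv P i (x a)) \<in> borel_measurable (PiM {..<b'} (\<lambda>_. obsS q))" for a i
    using measurable_compose[OF measurable_component_singleton[of a "{..<b'}" "\<lambda>_. obsS q"] vv_meas[of i q P]] by simp
  have tm: "integrable M (\<lambda>\<omega>. vv P j (Z b' \<omega>) * (Rs P Z b' j \<omega> * Tb P q Z b \<omega>)) \<and>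
     (\<integral>\<omega>. vv P j (Z b' \<omega>) * (Rs P Z b' j \<omega> * Tb P q Z b \<omega>) \<partial>M) = 0"
    if j: "j < q" for j
  proof -
    have gm: "g j \<in> borel_measurable (PiM {..<b'} (\<lambda>_. obsS q))"
      unfolding g_def[abs_def] using j bb by (intro borel_measurable_times borel_measurable_sum c) auto
    have gr: "g j (\<lambda>i\<in>{..<b'}. Z i \<omega>) = Rs P Z b' j \<omega> * Tb P q Z b \<omega>" for \<omega>
      using bb by (simp add: g_def Rs_def Tb_def)
    have R2: "integrable M (\<lambda>\<omega>. (Rs P Z b' j \<omega>)\<^sup>2)"
      using L_R(1)[of b' j j] b' j by (simp add: power2_eq_square)
    have gi0: "integrable M (\<lambda>\<omega>. Rs P Z b' j \<omega> * Tb P q Z b \<omega>)"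
      by (rule L2prod[OF R_meas T_meas R2 L_T2(1)]) (use b b' j in auto)
    have gi: "integrable M (\<lambda>\<omega>. g j (\<lambda>i\<in>{..<b'}. Z i \<omega>))"
      unfolding gr by (rule gi0)
    note K = K1[OF b' _ _ vv_meas[OF j] gm i_vv[OF j] gi]
    have "{..<b'} \<subseteq> {..<n}" "b' \<notin> {..<b'}" using b' by auto
    from K[OF this] show ?thesis unfolding gr using E_vv[OF j] by simp
  qed
  show "integrable M (\<lambda>\<omega>. Tb P q Z b \<omega> * Tb P q Z b' \<omega>)"
    unfolding eq using tm by (intro Bochner_Integration.integrable_sum) auto
  show "(\<integral>\<omega>. Tb P q Z b \<omega> * Tb P q Z b' \<omega> \<partial>M) = 0"
    unfolding eq using tm by (subst Bochner_Integration.integral_sum) auto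
qed

lemma L_D2:
  shows "integrable M (\<lambda>\<omega>. (Dd P q Z n \<omega>)\<^sup>2)"
    and "(\<integral>\<omega>. (Dd P q Z n \<omega>)\<^sup>2 \<partial>M) = real (n choose 2) * (\<Sum>j<q. \<Sum>k<q. (Cm P j k)\<^sup>2)"
proof -
  have eq: "(Dd P q Z n \<omega>)\<^sup>2 = (\<Sum>b<n. \<Sum>b'<n. Tb P q Z b \<omega> * Tb P q Z b' \<omega>)" for \<omega>
    unfolding Dd_def power2_eq_square sum_product by simp
  have tm: "integrable M (\<lambda>\<omega>. Tb P q Z b \<omega> * Tb P q Z b' \<omega>) \<and>
      (\<integral>\<omega>. Tb P q Z b \<omega> * Tb P q Z b' \<omega> \<partial>M) = (if b = b' then real b * (\<Sum>j<q. \<Sum>k<q. (Cm P j k)\<^sup>2) else 0)"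
    if "b < n" "b' < n" for b b'
  proof -
    consider "b = b'" | "b < b'" | "b' < b" by linarith
    then show ?thesis
    proof cases
      case 1 then show ?thesis using L_T2[of b] that by (simp add: power2_eq_square)
    next
      case 2 then show ?thesis using L_cross[of b b'] that by simp
    next
      case 3 then show ?thesis using L_cross[of b' b] that by (simp add: mult.commute)
    qed
  qed
  have ti: "integrable M (\<lambda>\<omega>. \<Sum>b'<n. Tb P q Z b \<omega> * Tb P q Z b' \<omega>)" if "b < n" for b
    using tm that by (intro Bochner_Integration.integrable_sum) auto
  show "integrable M (\<lambda>\<omega>. (Dd P q Z n \<omega>)\<^sup>2)"
    unfolding eq by (rule Bochner_Integration.integrable_sum) (rule ti, simp)
  have "(\<integral>\<omega>. (Dd P q Z n \<omega>)\<^sup>2 \<partial>M) = (\<Sum>b<n. (\<integral>\<omega>. (\<Sum>b'<n. Tb P q Z b \<omega> * Tb P q Z b' \<omega>) \<partial>M))"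
    unfolding eq using ti by (intro Bochner_Integration.integral_sum) auto
  also have "\<dots> = (\<Sum>b<n. \<Sum>b'<n. (\<integral>\<omega>. Tb P q Z b \<omega> * Tb P q Z b' \<omega> \<partial>M))"
    using tm by (intro sum.cong refl Bochner_Integration.integral_sum) auto
  also have "\<dots> = (\<Sum>b<n. \<Sum>b'<n. (if b = b' then real b * (\<Sum>j<q. \<Sum>k<q. (Cm P j k)\<^sup>2) else 0))"
    using tm by (intro sum.cong refl) auto
  also have "\<dots> = (\<Sum>b<n. real b) * (\<Sum>j<q. \<Sum>k<q. (Cm P j k)\<^sup>2)"
    by (simp add: sum_distrib_right)
  finally show "(\<integral>\<omega>. (Dd P q Z n \<omega>)\<^sup>2 \<partial>M) = real (n choose 2) * (\<Sum>j<q. \<Sum>k<q. (Cm P j k)\<^sup>2)"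
    by (simp add: sum_lessThan_choose2)
qed

end

lemma pair_sum: "(\<Sum>b<m. \<Sum>a<b. (f a + f b)) = (real m - 1) * (\<Sum>i<m. f i :: real)"
proof (induction m)
  case 0 then show ?case by simp
next
  case (Suc m)
  have "(\<Sum>b<Suc m. \<Sum>a<b. (f a + f b)) = (real m - 1) * (\<Sum>i<m. f i) + ((\<Sum>a<m. f a) + real m * f m)"
    using Suc by (simp add: sum.distrib)
  also have "\<dots> = (real (Suc m) - 1) * (\<Sum>i<Suc m. f i)"
    by (simp add: algebra_simps)
  finally show ?case .
qed

lemma ww_split: "ww j x = vv Q j x + beta Q j"
  by (simp add: vv_def)

lemma inner_split:
  "(\<Sum>j<q. ww j x * ww j y) = (\<Sum>j<q. vv Q j y * vv Q j x) + (h5 Q q x + h5 Q q y) + tau2 Q q"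
proof -
  have "(\<Sum>j<q. ww j x * ww j y) = (\<Sum>j<q. vv Q j y * vv Q j x + (beta Q j * vv Q j x + beta Q j * vv Q j y) + (beta Q j)\<^sup>2)"
    by (intro sum.cong refl) (simp add: ww_split[of _ _ Q] algebra_simps power2_eq_square)
  then show ?thesis by (simp add: sum.distrib h5_def tau2_def)
qed

lemma num_decomp:
  "(\<Sum>b<m. \<Sum>a<b. \<Sum>j<q. ww j (z a) * ww j (z b)) =
    (\<Sum>b<m. \<Sum>j<q. vv Q j (z b) * (\<Sum>a<b. vv Q j (z a))) + (real m - 1) * (\<Sum>i<m. h5 Q q (z i)) + real (m choose 2) * tau2 Q q"
proof -
  have "(\<Sum>b<m. \<Sum>a<b. \<Sum>j<q. ww j (z a) * ww j (z b)) =
     (\<Sum>b<m. \<Sum>a<b. ((\<Sum>j<q. vv Q j (z b) * vv Q j (z a)) + (h5 Q q (z a) + h5 Q q (z b)) + tau2 Q q))"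
    by (simp add: inner_split[where Q=Q])
  also have "\<dots> = (\<Sum>b<m. \<Sum>a<b. (\<Sum>j<q. vv Q j (z b) * vv Q j (z a))) + (\<Sum>b<m. \<Sum>a<b. (h5 Q q (z a) + h5 Q q (z b))) + (\<Sum>b<m. real b * tau2 Q q)"
    by (simp add: sum.distrib)
  also have "(\<Sum>b<m. \<Sum>a<b. (\<Sum>j<q. vv Q j (z b) * vv Q j (z a))) = (\<Sum>b<m. \<Sum>j<q. vv Q j (z b) * (\<Sum>a<b. vv Q j (z a)))"
  proof (rule sum.cong[OF refl])
    fix b
    have "(\<Sum>a<b. \<Sum>j<q. vv Q j (z b) * vv Q j (z a)) = (\<Sum>j<q. \<Sum>a<b. vv Q j (z b) * vv Q j (z a))"
      by (rule sum.swap)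
    then show "(\<Sum>a<b. \<Sum>j<q. vv Q j (z b) * vv Q j (z a)) = (\<Sum>j<q. vv Q j (z b) * (\<Sum>a<b. vv Q j (z a)))"
      by (simp add: sum_distrib_left)
  qed
  also have "(\<Sum>b<m. \<Sum>a<b. (h5 Q q (z a) + h5 Q q (z b))) = (real m - 1) * (\<Sum>i<m. h5 Q q (z i))"
    by (rule pair_sum)
  also have "(\<Sum>b<m. real b * tau2 Q q) = real (m choose 2) * tau2 Q q"
    by (simp add: sum_distrib_right[symmetric] sum_lessThan_choose2)
  finally show ?thesis .
qed

lemma alg1:
  fixes A B N s :: real
  assumes "N > 1"
  shows "(A - B / N) / (N - 1) - s = (A - N * s) / (N - 1) - B / (N * (N - 1)) + s / (N - 1)"
proof -
  have n1: "N - 1 \<noteq> 0" using assms by auto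
  have a: "(A - N * s) / (N - 1) + s / (N - 1) = A / (N - 1) - s"
  proof -
    have "(A - N * s) / (N - 1) + s / (N - 1) = (A - (N - 1) * s) / (N - 1)"
      by (simp add: add_divide_distrib[symmetric] algebra_simps)
    also have "\<dots> = A / (N - 1) - s" using n1 by (simp add: diff_divide_distrib)
    finally show ?thesis .
  qed
  have b: "B / (N * (N - 1)) = (B / N) / (N - 1)" by simp
  show ?thesis using a unfolding b diff_divide_distrib by linarith
qed

lemma var_decomp:
  fixes y :: "nat \<Rightarrow> real"
  assumes m: "m \<ge> 2"
  shows "(\<Sum>i<m. (y i - (\<Sum>i<m. y i) / real m)\<^sup>2) / (real m - 1) - s =
     (\<Sum>i<m. ((y i - al)\<^sup>2 - s)) / (real m - 1) - (\<Sum>i<m. (y i - al))\<^sup>2 / (real m * (real m - 1)) + s / (real m - 1)"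
proof -
  define u where "u i = y i - al" for i
  have mpos: "real m > 1" using m by simp
  have y: "y i = u i + al" for i by (simp add: u_def)
  have Sy: "(\<Sum>i<m. y i) = (\<Sum>i<m. u i) + real m * al" by (simp add: y sum.distrib)
  have c: "(\<Sum>i<m. y i) / real m = (\<Sum>i<m. u i) / real m + al" using mpos by (simp add: Sy field_simps)
  have gen: "\<And>cc. (\<Sum>i<m. (u i - cc)\<^sup>2) = (\<Sum>i<m. (u i)\<^sup>2) - 2 * cc * (\<Sum>i<m. u i) + real m * cc\<^sup>2"
  proof -
    fix cc
    have "(\<Sum>i<m. (u i - cc)\<^sup>2) = (\<Sum>i<m. (u i)\<^sup>2 - (2 * cc) * u i + cc\<^sup>2)"
      by (intro sum.cong refl) (simp add: power2_diff algebra_simps)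
    also have "\<dots> = (\<Sum>i<m. (u i)\<^sup>2) - (2 * cc) * (\<Sum>i<m. u i) + real m * cc\<^sup>2"
      by (simp add: sum.distrib sum_subtractf sum_distrib_left)
    finally show "(\<Sum>i<m. (u i - cc)\<^sup>2) = (\<Sum>i<m. (u i)\<^sup>2) - 2 * cc * (\<Sum>i<m. u i) + real m * cc\<^sup>2" .
  qed
  have "(\<Sum>i<m. (y i - (\<Sum>i<m. y i) / real m)\<^sup>2) = (\<Sum>i<m. (u i - (\<Sum>i<m. u i) / real m)\<^sup>2)"
    unfolding c by (simp add: y)
  also have "\<dots> = (\<Sum>i<m. (u i)\<^sup>2) - 2 * ((\<Sum>i<m. u i) / real m) * (\<Sum>i<m. u i) + real m * ((\<Sum>i<m. u i) / real m)\<^sup>2"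
    using gen by blast
  also have "\<dots> = (\<Sum>i<m. (u i)\<^sup>2) - (\<Sum>i<m. u i)\<^sup>2 / real m"
    using mpos by (simp add: field_simps power2_eq_square)
  finally have e1: "(\<Sum>i<m. (y i - (\<Sum>i<m. y i) / real m)\<^sup>2) = (\<Sum>i<m. (u i)\<^sup>2) - (\<Sum>i<m. u i)\<^sup>2 / real m" .
  have e2: "(\<Sum>i<m. ((u i)\<^sup>2 - s)) = (\<Sum>i<m. (u i)\<^sup>2) - real m * s" by (simp add: sum_subtractf)
  have m1: "real m - 1 \<noteq> 0" "real m \<noteq> 0" using mpos by auto
  have "(\<Sum>i<m. (y i - (\<Sum>i<m. y i) / real m)\<^sup>2) / (real m - 1) - s =
     ((\<Sum>i<m. (u i)\<^sup>2) - real m * s) / (real m - 1) - (\<Sum>i<m. u i)\<^sup>2 / (real m * (real m - 1)) + s / (real m - 1)"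
    unfolding e1 by (rule alg1[OF mpos])
  from this[unfolded e2[symmetric], unfolded u_def] show ?thesis .
qed


lemma choose2_real: "real (m choose 2) = real m * (real m - 1) / 2"
proof (induction m)
  case 0 then show ?case by simp
next
  case (Suc m)
  have "Suc m choose 2 = m + (m choose 2)"
    using binomial_Suc_Suc[of m 1] by (simp add: numeral_2_eq_2)
  then show ?case using Suc by (simp add: field_simps)
qed

lemma sq_le_iff_abs: "(c::real) > 0 \<Longrightarrow> (c \<le> \<bar>y\<bar>) = (c\<^sup>2 \<le> y\<^sup>2)"
  using abs_le_square_iff[of c y] by simp

context prob_space begin

lemma cheb:
  fixes f :: "'a \<Rightarrow> real"
  assumes fm: "f \<in> borel_measurable M" and f2: "integrable M (\<lambda>x. (f x)\<^sup>2)" and c: "c > 0"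
  shows "measure M {x\<in>space M. c \<le> \<bar>f x\<bar>} \<le> (\<integral>x. (f x)\<^sup>2 \<partial>M) / c\<^sup>2"
proof -
  have "{x\<in>space M. c \<le> \<bar>f x\<bar>} = {x\<in>space M. c\<^sup>2 \<le> (f x)\<^sup>2}" using sq_le_iff_abs[OF c] by auto
  also have "measure M \<dots> \<le> (\<integral>x. (f x)\<^sup>2 \<partial>M) / c\<^sup>2"
    by (rule integral_Markov_inequality_measure[OF f2 sets.top]) (use c in auto)
  finally show ?thesis .
qed

lemma markov0:
  fixes u :: "'a \<Rightarrow> real"
  assumes ui: "integrable M u" and nn: "\<And>x. 0 \<le> u x" and c: "c > 0"
  shows "measure M {x\<in>space M. c \<le> \<bar>u x\<bar>} \<le> (\<integral>x. u x \<partial>M) / c"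
proof -
  have "{x\<in>space M. c \<le> \<bar>u x\<bar>} = {x\<in>space M. c \<le> u x}" using nn by auto
  also have "measure M \<dots> \<le> (\<integral>x. u x \<partial>M) / c"
    by (rule integral_Markov_inequality_measure[OF ui sets.top]) (use c nn in auto)
  finally show ?thesis .
qed

end


context model begin

interpretation Pp: prob_space P by (rule P_prob)

lemma stat_ident:
  assumes n2: "n \<ge> 2"
  shows "sigmahat2 n q (\<lambda>i \<omega> j. fst (Z i \<omega>) j) (\<lambda>i \<omega>. snd (Z i \<omega>)) \<omega> - sigma2 P q =
     (\<Sum>i<n. h1 P (Z i \<omega>)) / (real n - 1) - (\<Sum>i<n. uu P (Z i \<omega>))\<^sup>2 / (real n * (real n - 1)) + sigmaY2 P / (real n - 1)
     - Dd P q Z n \<omega> / real (n choose 2) - 2 * (\<Sum>i<n. h5 P q (Z i \<omega>)) / real n"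
proof -
  have N: "real n > 1" using n2 by simp
  have C: "real (n choose 2) = real n * (real n - 1) / 2" by (rule choose2_real)
  have Cpos: "real (n choose 2) > 0" unfolding C using N by simp
  have sY: "sigmaYhat2 n (\<lambda>i \<omega>. snd (Z i \<omega>)) \<omega> - sigmaY2 P =
     (\<Sum>i<n. h1 P (Z i \<omega>)) / (real n - 1) - (\<Sum>i<n. uu P (Z i \<omega>))\<^sup>2 / (real n * (real n - 1)) + sigmaY2 P / (real n - 1)"
    unfolding sigmaYhat2_def Ybar_def h1_def uu_def
    by (rule var_decomp[OF n2])
  have num: "(\<Sum>i2<n. \<Sum>i1<i2. \<Sum>j<q. (fst (Z i1 \<omega>) j * snd (Z i1 \<omega>)) * (fst (Z i2 \<omega>) j * snd (Z i2 \<omega>))) =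
     Dd P q Z n \<omega> + (real n - 1) * (\<Sum>i<n. h5 P q (Z i \<omega>)) + real (n choose 2) * tau2 P q"
    using num_decomp[where m=n and q=q and z="\<lambda>i. Z i \<omega>" and Q=P] by (simp add: ww_def Dd_def Tb_def Rs_def)
  have tH: "tauhat2 n q (\<lambda>i \<omega> j. fst (Z i \<omega>) j) (\<lambda>i \<omega>. snd (Z i \<omega>)) \<omega> - tau2 P q =
      Dd P q Z n \<omega> / real (n choose 2) + 2 * (\<Sum>i<n. h5 P q (Z i \<omega>)) / real n"
  proof -
    have "tauhat2 n q (\<lambda>i \<omega> j. fst (Z i \<omega>) j) (\<lambda>i \<omega>. snd (Z i \<omega>)) \<omega> =
       (Dd P q Z n \<omega> + (real n - 1) * (\<Sum>i<n. h5 P q (Z i \<omega>)) + real (n choose 2) * tau2 P q) / real (n choose 2)"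
      unfolding tauhat2_def num ..
    also have "\<dots> = Dd P q Z n \<omega> / real (n choose 2) + ((real n - 1) / real (n choose 2)) * (\<Sum>i<n. h5 P q (Z i \<omega>)) + tau2 P q"
      using Cpos by (simp add: add_divide_distrib)
    also have "(real n - 1) / real (n choose 2) = 2 / real n"
      unfolding C using N by (simp add: field_simps)
    finally show ?thesis by simp
  qed
  show ?thesis unfolding sigmahat2_def sigma2_def using sY tH by simp
qed

end

context model begin

interpretation Pp: prob_space P by (rule P_prob)

lemma prob_bound:
  assumes n2: "n \<ge> 2" and e: "e > 0"
  shows "measure M {\<omega>\<in>space M. e < \<bar>sigmahat2 n q (\<lambda>i \<omega> j. fst (Z i \<omega>) j) (\<lambda>i \<omega>. snd (Z i \<omega>)) \<omega> - sigma2 P q\<bar>}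
     \<le> (real n * mu4 P / (real n - 1)\<^sup>2) / (e/5)\<^sup>2 + 2 * ((sigmaY2 P / (real n - 1)) / (e/5))
       + ((\<Sum>j<q. \<Sum>k<q. (Cm P j k)\<^sup>2) / real (n choose 2)) / (e/5)\<^sup>2
       + (4 * (\<Sum>j<q. \<Sum>k<q. beta P j * beta P k * Cm P j k) / real n) / (e/5)\<^sup>2"
proof -
  define c where "c = e / 5"
  have c: "c > 0" using e by (simp add: c_def)
  have N: "real n > 1" using n2 by simp
  have C: "real (n choose 2) = real n * (real n - 1) / 2" by (rule choose2_real)
  have Cpos: "real (n choose 2) > 0" unfolding C using N by simp
  define S1 where "S1 \<omega> = (\<Sum>i<n. h1 P (Z i \<omega>))" for \<omega>
  define SU where "SU \<omega> = (\<Sum>i<n. uu P (Z i \<omega>))" for \<omega>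
  define S5 where "S5 \<omega> = (\<Sum>i<n. h5 P q (Z i \<omega>))" for \<omega>
  define D where "D = Dd P q Z n"
  define p1 where "p1 \<omega> = S1 \<omega> / (real n - 1)" for \<omega>
  define p2 where "p2 \<omega> = (SU \<omega>)\<^sup>2 / (real n * (real n - 1))" for \<omega>
  define p3 where "p3 (\<omega>::'a) = sigmaY2 P / (real n - 1)" for \<omega>
  define p4 where "p4 \<omega> = D \<omega> / real (n choose 2)" for \<omega>
  define p5 where "p5 \<omega> = 2 * S5 \<omega> / real n" for \<omega>
  have S1m: "S1 \<in> borel_measurable M" unfolding S1_def[abs_def]
    by (intro borel_measurable_sum Zf_meas h1_meas) auto
  have SUm: "SU \<in> borel_measurable M" unfolding SU_def[abs_def]
    by (intro borel_measurable_sum Zf_meas uu_meas) auto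
  have S5m: "S5 \<in> borel_measurable M" unfolding S5_def[abs_def]
    by (intro borel_measurable_sum Zf_meas h5_meas) auto
  have Dm: "D \<in> borel_measurable M" unfolding D_def Dd_def[abs_def]
    by (intro borel_measurable_sum T_meas) auto
  note G1h1 = G1[OF h1_meas h1_meas i_h1sq i_h1sq E_h1, of "{..<n}", simplified]
  note G1uu = G1[OF uu_meas uu_meas i_uu2 i_uu2 E_uu, of "{..<n}", simplified]
  note G1h5 = G1[OF h5_meas h5_meas i_h5sq i_h5sq E_h5, of "{..<n}", simplified]
  have S1sq: "integrable M (\<lambda>\<omega>. (S1 \<omega>)\<^sup>2)" "(\<integral>\<omega>. (S1 \<omega>)\<^sup>2 \<partial>M) = real n * (\<integral>z. (h1 P z)\<^sup>2 \<partial>P)"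
    using G1h1 by (simp_all add: S1_def power2_eq_square)
  have SUsq: "integrable M (\<lambda>\<omega>. (SU \<omega>)\<^sup>2)" "(\<integral>\<omega>. (SU \<omega>)\<^sup>2 \<partial>M) = real n * sigmaY2 P"
    using G1uu E_uu2 by (simp_all add: SU_def power2_eq_square)
  have S5sq: "integrable M (\<lambda>\<omega>. (S5 \<omega>)\<^sup>2)" "(\<integral>\<omega>. (S5 \<omega>)\<^sup>2 \<partial>M) = real n * (\<integral>z. (h5 P q z)\<^sup>2 \<partial>P)"
    using G1h5 by (simp_all add: S5_def power2_eq_square)
  have Dsq: "integrable M (\<lambda>\<omega>. (D \<omega>)\<^sup>2)" "(\<integral>\<omega>. (D \<omega>)\<^sup>2 \<partial>M) = real (n choose 2) * (\<Sum>j<q. \<Sum>k<q. (Cm P j k)\<^sup>2)"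
    using L_D2 by (simp_all add: D_def)
  define A1 where "A1 = {\<omega>\<in>space M. c \<le> \<bar>p1 \<omega>\<bar>}"
  define A2 where "A2 = {\<omega>\<in>space M. c \<le> \<bar>p2 \<omega>\<bar>}"
  define A3 where "A3 = {\<omega>\<in>space M. c \<le> \<bar>p3 \<omega>\<bar>}"
  define A4 where "A4 = {\<omega>\<in>space M. c \<le> \<bar>p4 \<omega>\<bar>}"
  define A5 where "A5 = {\<omega>\<in>space M. c \<le> \<bar>p5 \<omega>\<bar>}"
  have p1m: "p1 \<in> borel_measurable M" unfolding p1_def[abs_def] using S1m by measurable
  have p2m: "p2 \<in> borel_measurable M" unfolding p2_def[abs_def] using SUm by measurable
  have p3m: "p3 \<in> borel_measurable M" unfolding p3_def[abs_def] by measurable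
  have p4m: "p4 \<in> borel_measurable M" unfolding p4_def[abs_def] using Dm by measurable
  have p5m: "p5 \<in> borel_measurable M" unfolding p5_def[abs_def] using S5m by measurable
  have A1s: "A1 \<in> sets M" unfolding A1_def using p1m by measurable
  have A2s: "A2 \<in> sets M" unfolding A2_def using p2m by measurable
  have A3s: "A3 \<in> sets M" unfolding A3_def using p3m by measurable
  have A4s: "A4 \<in> sets M" unfolding A4_def using p4m by measurable
  have A5s: "A5 \<in> sets M" unfolding A5_def using p5m by measurable
  have sub: "{\<omega>\<in>space M. e < \<bar>sigmahat2 n q (\<lambda>i \<omega> j. fst (Z i \<omega>) j) (\<lambda>i \<omega>. snd (Z i \<omega>)) \<omega> - sigma2 P q\<bar>}
     \<subseteq> A1 \<union> A2 \<union> A3 \<union> A4 \<union> A5"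
  proof
    fix \<omega> assume w: "\<omega> \<in> {\<omega>\<in>space M. e < \<bar>sigmahat2 n q (\<lambda>i \<omega> j. fst (Z i \<omega>) j) (\<lambda>i \<omega>. snd (Z i \<omega>)) \<omega> - sigma2 P q\<bar>}"
    then have sp: "\<omega> \<in> space M" and lt: "e < \<bar>p1 \<omega> - p2 \<omega> + p3 \<omega> - p4 \<omega> - p5 \<omega>\<bar>"
      using stat_ident[OF n2, of \<omega>] by (auto simp: p1_def p2_def p3_def p4_def p5_def S1_def SU_def S5_def D_def)
    have "c \<le> \<bar>p1 \<omega>\<bar> \<or> c \<le> \<bar>p2 \<omega>\<bar> \<or> c \<le> \<bar>p3 \<omega>\<bar> \<or> c \<le> \<bar>p4 \<omega>\<bar> \<or> c \<le> \<bar>p5 \<omega>\<bar>"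
      using lt unfolding c_def by linarith
    then show "\<omega> \<in> A1 \<union> A2 \<union> A3 \<union> A4 \<union> A5" using sp by (auto simp: A1_def A2_def A3_def A4_def A5_def)
  qed
  have "measure M {\<omega>\<in>space M. e < \<bar>sigmahat2 n q (\<lambda>i \<omega> j. fst (Z i \<omega>) j) (\<lambda>i \<omega>. snd (Z i \<omega>)) \<omega> - sigma2 P q\<bar>}
     \<le> measure M (A1 \<union> A2 \<union> A3 \<union> A4 \<union> A5)"
    by (rule finite_measure_mono[OF sub]) (use A1s A2s A3s A4s A5s in auto)
  also have "\<dots> \<le> measure M A1 + measure M A2 + measure M A3 + measure M A4 + measure M A5"
  proof -
    have "measure M (A1 \<union> A2 \<union> A3 \<union> A4 \<union> A5) \<le> measure M (A1 \<union> A2 \<union> A3 \<union> A4) + measure M A5"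
      using A1s A2s A3s A4s A5s by (intro measure_Un_le) auto
    moreover have "measure M (A1 \<union> A2 \<union> A3 \<union> A4) \<le> measure M (A1 \<union> A2 \<union> A3) + measure M A4"
      using A1s A2s A3s A4s by (intro measure_Un_le) auto
    moreover have "measure M (A1 \<union> A2 \<union> A3) \<le> measure M (A1 \<union> A2) + measure M A3"
      using A1s A2s A3s by (intro measure_Un_le) auto
    moreover have "measure M (A1 \<union> A2) \<le> measure M A1 + measure M A2"
      using A1s A2s by (intro measure_Un_le) auto
    ultimately show ?thesis by linarith
  qed
  also have "\<dots> \<le> (real n * mu4 P / (real n - 1)\<^sup>2) / c\<^sup>2 + (sigmaY2 P / (real n - 1)) / c + (sigmaY2 P / (real n - 1)) / c
       + ((\<Sum>j<q. \<Sum>k<q. (Cm P j k)\<^sup>2) / real (n choose 2)) / c\<^sup>2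
       + (4 * (\<Sum>j<q. \<Sum>k<q. beta P j * beta P k * Cm P j k) / real n) / c\<^sup>2"
  proof -
    have b1: "measure M A1 \<le> (real n * mu4 P / (real n - 1)\<^sup>2) / c\<^sup>2"
    proof -
      have i: "integrable M (\<lambda>\<omega>. (p1 \<omega>)\<^sup>2)" using S1sq(1) by (simp add: p1_def power_divide)
      have "(\<integral>\<omega>. (p1 \<omega>)\<^sup>2 \<partial>M) = real n * (\<integral>z. (h1 P z)\<^sup>2 \<partial>P) / (real n - 1)\<^sup>2"
        using S1sq by (simp add: p1_def power_divide)
      also have "\<dots> \<le> real n * mu4 P / (real n - 1)\<^sup>2"
        using E_h1sq by (intro divide_right_mono mult_left_mono) auto
      finally have "(\<integral>\<omega>. (p1 \<omega>)\<^sup>2 \<partial>M) \<le> real n * mu4 P / (real n - 1)\<^sup>2" .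
      then show ?thesis using cheb[OF p1m i c] c unfolding A1_def
        by (smt (verit, best) divide_right_mono zero_le_power2)
    qed
    have b2: "measure M A2 \<le> (sigmaY2 P / (real n - 1)) / c"
    proof -
      have i: "integrable M p2" unfolding p2_def[abs_def] using SUsq(1) by simp
      have "(\<integral>\<omega>. p2 \<omega> \<partial>M) = real n * sigmaY2 P / (real n * (real n - 1))"
        using SUsq by (simp add: p2_def)
      also have "\<dots> = sigmaY2 P / (real n - 1)" using N by simp
      moreover have nn: "\<And>x. 0 \<le> p2 x" using N by (simp add: p2_def)
      ultimately show ?thesis using markov0[OF i nn c] unfolding A2_def by simp
    qed
    have b3: "measure M A3 \<le> (sigmaY2 P / (real n - 1)) / c"
    proof -
      have "measure M A3 \<le> (\<integral>\<omega>. p3 \<omega> \<partial>M) / c"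
        unfolding A3_def by (rule markov0) (use c N s_nonneg in \<open>auto simp: p3_def\<close>)
      then show ?thesis by (simp add: p3_def prob_space)
    qed
    have b4: "measure M A4 \<le> ((\<Sum>j<q. \<Sum>k<q. (Cm P j k)\<^sup>2) / real (n choose 2)) / c\<^sup>2"
    proof -
      have i: "integrable M (\<lambda>\<omega>. (p4 \<omega>)\<^sup>2)" using Dsq(1) by (simp add: p4_def power_divide)
      have "(\<integral>\<omega>. (p4 \<omega>)\<^sup>2 \<partial>M) = real (n choose 2) * (\<Sum>j<q. \<Sum>k<q. (Cm P j k)\<^sup>2) / (real (n choose 2))\<^sup>2"
        using Dsq by (simp add: p4_def power_divide)
      also have "\<dots> = (\<Sum>j<q. \<Sum>k<q. (Cm P j k)\<^sup>2) / real (n choose 2)"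
        using Cpos by (simp add: power2_eq_square)
      finally show ?thesis using cheb[OF p4m i c] unfolding A4_def by simp
    qed
    have b5: "measure M A5 \<le> (4 * (\<Sum>j<q. \<Sum>k<q. beta P j * beta P k * Cm P j k) / real n) / c\<^sup>2"
    proof -
      have i: "integrable M (\<lambda>\<omega>. (p5 \<omega>)\<^sup>2)" using S5sq(1) by (simp add: p5_def power_divide power_mult_distrib)
      have "(\<integral>\<omega>. (p5 \<omega>)\<^sup>2 \<partial>M) = 4 * (real n * (\<integral>z. (h5 P q z)\<^sup>2 \<partial>P)) / (real n)\<^sup>2"
        using S5sq by (simp add: p5_def power_divide power_mult_distrib)
      also have "\<dots> = 4 * (\<Sum>j<q. \<Sum>k<q. beta P j * beta P k * Cm P j k) / real n"
        using N E_h5sq by (simp add: power2_eq_square)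
      finally show ?thesis using cheb[OF p5m i c] unfolding A5_def by simp
    qed
    show ?thesis using b1 b2 b3 b4 b5 by linarith
  qed
  finally show ?thesis unfolding c_def by (simp add: mult.commute)
qed

end

lemma tau2_nonneg: "0 \<le> tau2 Q q"
  unfolding tau2_def by (intro sum_nonneg) auto

lemma frob_nonneg: "0 \<le> frobA2 Q q"
  unfolding frobA2_def by (intro sum_nonneg) auto

lemma CC_bound: "(\<Sum>j<q. \<Sum>k<q. (Cm Q j k)\<^sup>2) \<le> 2 * frobA2 Q q + 2 * (tau2 Q q)\<^sup>2"
proof -
  have "(\<Sum>j<q. \<Sum>k<q. (Cm Q j k)\<^sup>2) \<le> (\<Sum>j<q. \<Sum>k<q. 2 * (Amat Q j k)\<^sup>2 + 2 * ((beta Q j)\<^sup>2 * (beta Q k)\<^sup>2))"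
  proof (intro sum_mono)
    fix j k
    have "0 \<le> (Amat Q j k + beta Q j * beta Q k)\<^sup>2" by simp
    then show "(Cm Q j k)\<^sup>2 \<le> 2 * (Amat Q j k)\<^sup>2 + 2 * ((beta Q j)\<^sup>2 * (beta Q k)\<^sup>2)"
      unfolding Cm_def by (simp add: power2_eq_square algebra_simps)
  qed
  also have "\<dots> = 2 * frobA2 Q q + 2 * (tau2 Q q)\<^sup>2"
    by (simp add: frobA2_def tau2_def sum.distrib sum_distrib_left power2_eq_square sum_product mult_ac)
  finally show ?thesis .
qed

lemma H_bound: "(\<Sum>j<q. \<Sum>k<q. beta Q j * beta Q k * Cm Q j k) \<le> tau2 Q q * sqrt (frobA2 Q q)"
proof -
  define a where "a = (\<lambda>(j, k). beta Q j * beta Q k)"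
  define b where "b = (\<lambda>(j, k). Amat Q j k)"
  have H: "(\<Sum>j<q. \<Sum>k<q. beta Q j * beta Q k * Cm Q j k) = (\<Sum>x\<in>{..<q}\<times>{..<q}. a x * b x) - (tau2 Q q)\<^sup>2"
  proof -
    have "(\<Sum>j<q. \<Sum>k<q. beta Q j * beta Q k * Cm Q j k) = (\<Sum>j<q. \<Sum>k<q. beta Q j * beta Q k * Amat Q j k) - (\<Sum>j<q. \<Sum>k<q. (beta Q j)\<^sup>2 * (beta Q k)\<^sup>2)"
      by (simp add: Cm_def algebra_simps sum_subtractf power2_eq_square)
    also have "(\<Sum>j<q. \<Sum>k<q. (beta Q j)\<^sup>2 * (beta Q k)\<^sup>2) = (tau2 Q q)\<^sup>2"
      by (simp add: tau2_def power2_eq_square sum_product)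
    also have "(\<Sum>j<q. \<Sum>k<q. beta Q j * beta Q k * Amat Q j k) = (\<Sum>x\<in>{..<q}\<times>{..<q}. a x * b x)"
      by (simp add: sum.cartesian_product a_def b_def split_beta)
    finally show ?thesis .
  qed
  have A2: "(\<Sum>x\<in>{..<q}\<times>{..<q}. (a x)\<^sup>2) = (tau2 Q q)\<^sup>2"
  proof -
    have "(\<Sum>x\<in>{..<q}\<times>{..<q}. (a x)\<^sup>2) = (\<Sum>j<q. \<Sum>k<q. (beta Q j)\<^sup>2 * (beta Q k)\<^sup>2)"
      by (simp add: sum.cartesian_product a_def split_beta power_mult_distrib)
    also have "\<dots> = (tau2 Q q)\<^sup>2"
      by (simp add: tau2_def power2_eq_square sum_product)
    finally show ?thesis .
  qed
  have B2: "(\<Sum>x\<in>{..<q}\<times>{..<q}. (b x)\<^sup>2) = frobA2 Q q"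
    by (simp add: sum.cartesian_product b_def frobA2_def split_beta)
  have CS: "(\<Sum>x\<in>{..<q}\<times>{..<q}. a x * b x)\<^sup>2 \<le> (tau2 Q q)\<^sup>2 * frobA2 Q q"
    using Cauchy_Schwarz_ineq_sum[of a b "{..<q}\<times>{..<q}"] unfolding A2 B2 .
  have "(\<Sum>x\<in>{..<q}\<times>{..<q}. a x * b x) \<le> sqrt ((tau2 Q q)\<^sup>2 * frobA2 Q q)"
    using CS real_le_rsqrt by blast
  also have "\<dots> = tau2 Q q * sqrt (frobA2 Q q)"
    using tau2_nonneg by (simp add: real_sqrt_mult)
  finally show ?thesis unfolding H by (smt (verit) zero_le_power2)
qed

lemma lim1: "(\<lambda>n. real n / (real n - 1)\<^sup>2) \<longlonglongrightarrow> 0" by real_asymp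
lemma lim2: "(\<lambda>n. 1 / (real n - 1)) \<longlonglongrightarrow> 0" by real_asymp
lemma lim3: "(\<lambda>n. 1 / real (n choose 2)) \<longlonglongrightarrow> 0"
  unfolding choose2_real by real_asymp
lemma lim4: "(\<lambda>n. 2 * real n / (real n - 1)) \<longlonglongrightarrow> 2" by real_asymp


theorem corollary1:
  fixes M :: "nat \<Rightarrow> 'a measure"
    and P :: "nat \<Rightarrow> ((nat \<Rightarrow> real) \<times> real) measure"
    and p :: "nat \<Rightarrow> nat"
    and X :: "nat \<Rightarrow> nat \<Rightarrow> 'a \<Rightarrow> nat \<Rightarrow> real"
    and Y :: "nat \<Rightarrow> nat \<Rightarrow> 'a \<Rightarrow> real"
  assumes M_prob: "\<And>n. prob_space (M n)"
    and P_prob: "\<And>n. prob_space (P n)"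
    and P_sets: "\<And>n. sets (P n) = sets (obsS (p n))"
    and obs_meas: "\<And>n i. i < n \<Longrightarrow>
        (\<lambda>\<omega>. (restrict (X n i \<omega>) {..<p n}, Y n i \<omega>)) \<in> measurable (M n) (obsS (p n))"
    and obs_indep: "\<And>n. prob_space.indep_vars (M n) (\<lambda>_. obsS (p n))
        (\<lambda>i \<omega>. (restrict (X n i \<omega>) {..<p n}, Y n i \<omega>)) {..<n}"
    and obs_dist: "\<And>n i. i < n \<Longrightarrow>
        distr (M n) (obsS (p n)) (\<lambda>\<omega>. (restrict (X n i \<omega>) {..<p n}, Y n i \<omega>)) = P n"
    and Y2_int: "\<And>n. integrable (P n) (\<lambda>z. (snd z)\<^sup>2)"
    and X2_int: "\<And>n. integrable (P n) (\<lambda>z. \<Sum>j<p n. (fst z j)\<^sup>2)"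
    and X_mean: "\<And>n j. j < p n \<Longrightarrow> (LINT z|P n. fst z j) = 0"
    and X_var: "\<And>n j k. j < p n \<Longrightarrow> k < p n \<Longrightarrow>
        (LINT z|P n. fst z j * fst z k) = (if j = k then 1 else 0)"
    and A_int: "\<And>n j k. j < p n \<Longrightarrow> k < p n \<Longrightarrow>
        integrable (P n) (\<lambda>z. fst z j * fst z k * (snd z)\<^sup>2)"
    and mu4_int: "\<And>n. integrable (P n) (\<lambda>z. (snd z - alpha (P n)) ^ 4)"
    and mu4_bdd: "\<exists>C. \<forall>n. mu4 (P n) \<le> C"
    and tau2_bdd: "\<exists>C. \<forall>n. tau2 (P n) (p n) \<le> C"
    and frob: "(\<lambda>n. frobA2 (P n) (p n) / (real n)\<^sup>2) \<longlonglongrightarrow> 0"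
  shows "\<forall>e>0. (\<lambda>n. measure (M n)
            {\<omega> \<in> space (M n). \<bar>sigmahat2 n (p n) (X n) (Y n) \<omega> - sigma2 (P n) (p n)\<bar> > e})
          \<longlonglongrightarrow> 0"
proof (intro allI impI)
  fix e :: real assume e: "e > 0"
  define c where "c = e / 5"
  have c: "c > 0" using e by (simp add: c_def)
  obtain K0 where K0: "\<forall>n. mu4 (P n) \<le> K0" using mu4_bdd by blast
  obtain K20 where K20: "\<forall>n. tau2 (P n) (p n) \<le> K20" using tau2_bdd by blast
  define K where "K = max K0 0"
  define K2 where "K2 = max K20 0"
  have K: "\<And>n. mu4 (P n) \<le> K" "K \<ge> 0" using K0 by (auto simp: K_def le_max_iff_disj)
  have K2: "\<And>n. tau2 (P n) (p n) \<le> K2" "K2 \<ge> 0" using K20 by (auto simp: K2_def le_max_iff_disj)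
  define F where "F n = frobA2 (P n) (p n)" for n
  define Z where "Z n i \<omega> = (restrict (X n i \<omega>) {..<p n}, Y n i \<omega>)" for n i \<omega>
  define U where "U n = K / c\<^sup>2 * (real n / (real n - 1)\<^sup>2) + (1 + K) / c * (1 / (real n - 1))
      + 2 / c\<^sup>2 * ((F n / (real n)\<^sup>2) * (2 * real n / (real n - 1))) + 2 * K2\<^sup>2 / c\<^sup>2 * (1 / real (n choose 2))
      + 4 * K2 / c\<^sup>2 * sqrt (F n / (real n)\<^sup>2)" for n
  have f1: "(\<lambda>n. F n / (real n)\<^sup>2) \<longlonglongrightarrow> 0" using frob by (simp add: F_def)
  have f2: "(\<lambda>n. (F n / (real n)\<^sup>2) * (2 * real n / (real n - 1))) \<longlonglongrightarrow> 0 * 2"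
    by (rule tendsto_mult[OF f1 lim4])
  have f3: "(\<lambda>n. sqrt (F n / (real n)\<^sup>2)) \<longlonglongrightarrow> sqrt 0"
    by (rule tendsto_real_sqrt[OF f1])
  have "U \<longlonglongrightarrow> K / c\<^sup>2 * 0 + (1 + K) / c * 0 + 2 / c\<^sup>2 * (0 * 2) + 2 * K2\<^sup>2 / c\<^sup>2 * 0 + 4 * K2 / c\<^sup>2 * sqrt 0"
    unfolding U_def[abs_def]
    by (intro tendsto_add tendsto_mult_left lim1 lim2 lim3 f2 f3)
  then have U0: "U \<longlonglongrightarrow> 0" by simp
  have bound: "measure (M n) {\<omega> \<in> space (M n). \<bar>sigmahat2 n (p n) (X n) (Y n) \<omega> - sigma2 (P n) (p n)\<bar> > e} \<le> U n"
    if n2: "n \<ge> 2" for n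
  proof -
    interpret m: model "M n" "P n" "p n" n "Z n"
      by (intro model.intro iid.intro iid_axioms.intro model_axioms.intro M_prob P_prob P_sets)
        (simp_all add: Z_def[abs_def] obs_meas obs_indep obs_dist Y2_int A_int mu4_int)
    have eq: "sigmahat2 n (p n) (X n) (Y n) \<omega> = sigmahat2 n (p n) (\<lambda>i \<omega> j. fst (Z n i \<omega>) j) (\<lambda>i \<omega>. snd (Z n i \<omega>)) \<omega>" for \<omega>
      by (simp add: sigmahat2_def tauhat2_def sigmaYhat2_def Ybar_def Z_def)
    have N: "real n > 1" using n2 by simp
    have Cr: "real (n choose 2) = real n * (real n - 1) / 2" by (rule choose2_real)
    have Cpos: "real (n choose 2) > 0" unfolding Cr using N by simp
    define s where "s = sigmaY2 (P n)"
    define T where "T = tau2 (P n) (p n)"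
    define CC where "CC = (\<Sum>j<p n. \<Sum>k<p n. (Cm (P n) j k)\<^sup>2)"
    define H where "H = (\<Sum>j<p n. \<Sum>k<p n. beta (P n) j * beta (P n) k * Cm (P n) j k)"
    have PB: "measure (M n) {\<omega> \<in> space (M n). \<bar>sigmahat2 n (p n) (X n) (Y n) \<omega> - sigma2 (P n) (p n)\<bar> > e}
      \<le> (real n * mu4 (P n) / (real n - 1)\<^sup>2) / c\<^sup>2 + 2 * ((s / (real n - 1)) / c)
       + (CC / real (n choose 2)) / c\<^sup>2 + (4 * H / real n) / c\<^sup>2"
      using m.prob_bound[OF n2 e] unfolding eq c_def s_def CC_def H_def by simp
    have t1: "(real n * mu4 (P n) / (real n - 1)\<^sup>2) / c\<^sup>2 \<le> K / c\<^sup>2 * (real n / (real n - 1)\<^sup>2)"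
    proof -
      have "real n * mu4 (P n) / (real n - 1)\<^sup>2 \<le> real n * K / (real n - 1)\<^sup>2"
        using K(1)[of n] by (intro divide_right_mono mult_left_mono) auto
      then have "(real n * mu4 (P n) / (real n - 1)\<^sup>2) / c\<^sup>2 \<le> (real n * K / (real n - 1)\<^sup>2) / c\<^sup>2"
        by (rule divide_right_mono) (use c in auto)
      then show ?thesis by (simp add: mult.commute)
    qed
    have t2: "2 * ((s / (real n - 1)) / c) \<le> (1 + K) / c * (1 / (real n - 1))"
    proof -
      have "2 * s \<le> 1 + mu4 (P n)" using m.s_le unfolding s_def by (simp add: field_simps)
      then have "2 * s \<le> 1 + K" using K(1)[of n] by linarith
      then have "2 * s / (real n - 1) \<le> (1 + K) / (real n - 1)" by (rule divide_right_mono) (use c N Cpos in auto)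
      then have "2 * s / (real n - 1) / c \<le> (1 + K) / (real n - 1) / c" by (rule divide_right_mono) (use c N Cpos in auto)
      then show ?thesis by (simp add: mult.commute)
    qed
    have t3: "(CC / real (n choose 2)) / c\<^sup>2 \<le> 2 / c\<^sup>2 * ((F n / (real n)\<^sup>2) * (2 * real n / (real n - 1))) + 2 * K2\<^sup>2 / c\<^sup>2 * (1 / real (n choose 2))"
    proof -
      have T: "0 \<le> T" "T \<le> K2" using tau2_nonneg K2(1)[of n] unfolding T_def by auto
      have "T\<^sup>2 \<le> K2\<^sup>2" using T by (intro power_mono) auto
      then have "CC \<le> 2 * F n + 2 * K2\<^sup>2" using CC_bound[where q="p n" and Q="P n"] unfolding CC_def F_def T_def by linarith
      then have "CC / real (n choose 2) \<le> (2 * F n + 2 * K2\<^sup>2) / real (n choose 2)"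
        by (rule divide_right_mono) (use c N Cpos in auto)
      also have "\<dots> = 2 * ((F n / (real n)\<^sup>2) * (2 * real n / (real n - 1))) + 2 * K2\<^sup>2 * (1 / real (n choose 2))"
      proof -
        have a1: "(F n / (real n)\<^sup>2) * (2 * real n / (real n - 1)) = 2 * F n / (real n * (real n - 1))"
          using N by (simp add: power2_eq_square)
        have a2: "(2 * F n + 2 * K2\<^sup>2) / (real n * (real n - 1) / 2) = 2 * (2 * F n / (real n * (real n - 1))) + 2 * K2\<^sup>2 * (1 / (real n * (real n - 1) / 2))"
          using N by (simp add: add_divide_distrib mult.commute)
        show ?thesis unfolding Cr a1 a2 ..
      qed
      finally have "CC / real (n choose 2) \<le> 2 * ((F n / (real n)\<^sup>2) * (2 * real n / (real n - 1))) + 2 * K2\<^sup>2 * (1 / real (n choose 2))" .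
      then have "(CC / real (n choose 2)) / c\<^sup>2 \<le> (2 * ((F n / (real n)\<^sup>2) * (2 * real n / (real n - 1))) + 2 * K2\<^sup>2 * (1 / real (n choose 2))) / c\<^sup>2"
        by (rule divide_right_mono) (use c N Cpos in auto)
      then show ?thesis by (simp add: add_divide_distrib mult.commute)
    qed
    have t4: "(4 * H / real n) / c\<^sup>2 \<le> 4 * K2 / c\<^sup>2 * sqrt (F n / (real n)\<^sup>2)"
    proof -
      have T: "0 \<le> T" "T \<le> K2" using tau2_nonneg K2(1)[of n] unfolding T_def by auto
      have sF: "0 \<le> sqrt (F n)" using frob_nonneg unfolding F_def by simp
      have "H \<le> T * sqrt (F n)" using H_bound[where q="p n" and Q="P n"] unfolding H_def T_def F_def .
      also have "\<dots> \<le> K2 * sqrt (F n)" using T sF by (intro mult_right_mono) auto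
      finally have "4 * H \<le> 4 * (K2 * sqrt (F n))" by simp
      then have "4 * H / real n \<le> 4 * (K2 * sqrt (F n)) / real n" by (rule divide_right_mono) (use c N Cpos in auto)
      also have "\<dots> = 4 * K2 * sqrt (F n / (real n)\<^sup>2)"
        using N by (simp add: real_sqrt_divide)
      finally have "4 * H / real n \<le> 4 * K2 * sqrt (F n / (real n)\<^sup>2)" .
      then have "(4 * H / real n) / c\<^sup>2 \<le> (4 * K2 * sqrt (F n / (real n)\<^sup>2)) / c\<^sup>2"
        by (rule divide_right_mono) (use c in auto)
      then show ?thesis by (simp add: mult.commute)
    qed
    show ?thesis using PB t1 t2 t3 t4 unfolding U_def by linarith
  qed
  show "(\<lambda>n. measure (M n) {\<omega> \<in> space (M n). \<bar>sigmahat2 n (p n) (X n) (Y n) \<omega> - sigma2 (P n) (p n)\<bar> > e}) \<longlonglongrightarrow> 0"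
  proof (rule tendsto_sandwich[OF _ _ tendsto_const U0])
    show "\<forall>\<^sub>F n in sequentially. 0 \<le> measure (M n) {\<omega> \<in> space (M n). \<bar>sigmahat2 n (p n) (X n) (Y n) \<omega> - sigma2 (P n) (p n)\<bar> > e}"
      by simp
    show "\<forall>\<^sub>F n in sequentially. measure (M n) {\<omega> \<in> space (M n). \<bar>sigmahat2 n (p n) (X n) (Y n) \<omega> - sigma2 (P n) (p n)\<bar> > e} \<le> U n"
      using bound by (intro eventually_sequentiallyI[of 2]) auto
  qed
qed


end
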